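(* Let $0<q<1$ and $p\ge1$. On the spin chain with sites $-p+\tfrac12,\dots,p-\tfrac12$, consider the probability measure on $p$-element sets of down-spin positions $y_1>y_2>\dots>y_p$ given by $$\mathbb P(y_1,\dots,y_p)=\frac{q^{2\sum_{i=1}^p y_i}}{\sum_{y'_1>\dots>y'_p}q^{2\sum_i y'_i}}$$ (the squared amplitudes of the normalized ground state $\sum q^{\sum_i y_i}\Omega(y_1,\dots,y_p)$ of the half-filled sector). For $1\le l\le p$ and $0\le\delta\le p$ let $P(l,\delta)$ be the probability that $y_l=\delta-l+\tfrac12$. Then $$P(l,\delta)=q^{2l\delta}\,\frac{\begin{bmatrix}p+\delta-l\\ \delta\end{bmatrix}_{q^2}\begin{bmatrix}p-\delta+l-1\\ l-1\end{bmatrix}_{q^2}}{\begin{bmatrix}2p\\ p\end{bmatrix}_{q^2}},$$ and, for fixed $l\ge1,\delta\ge0$, as $p\to\infty$, $$P(l,\delta)\to q^{2l\delta}\frac{(q^2;q^2)_\infty}{(q^2;q^2)_{l-1}(q^2;q^2)_\delta}.$$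
   Context: $\begin{bmatrix}n\\k\end{bmatrix}_{q^2}$ denotes the Gaussian binomial coefficient in base $q^2$ (zero if $k<0$ or $k>n$), and $(a;q^2)_k=\prod_{j=0}^{k-1}(1-aq^{2j})$, $(a;q^2)_\infty=\prod_{j\ge0}(1-aq^{2j})$. *)

theory Defs
  imports "HOL-Analysis.Analysis"
begin

definition gauss_binom :: "real \<Rightarrow> nat \<Rightarrow> nat \<Rightarrow> real" where
  "gauss_binom x n k =
     (if k \<le> n then (\<Prod>j<k. (1 - x ^ (n - j)) / (1 - x ^ (j + 1))) else 0)"

definition qpoch :: "real \<Rightarrow> real \<Rightarrow> nat \<Rightarrow> real" where
  "qpoch a x k = (\<Prod>j<k. 1 - a * x ^ j)"

definition qpoch_inf :: "real \<Rightarrow> real \<Rightarrow> real" where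
  "qpoch_inf a x = (\<Prod>j. 1 - a * x ^ j)"

definition sites :: "nat \<Rightarrow> real set" where
  "sites p = {real_of_int k + 1/2 | k. - int p \<le> k \<and> k < int p}"

definition configs :: "nat \<Rightarrow> real set set" where
  "configs p = {A. A \<subseteq> sites p \<and> card A = p}"

definition ypos :: "real set \<Rightarrow> nat \<Rightarrow> real" where
  "ypos A l = rev (sorted_list_of_set A) ! (l - 1)"

definition weight :: "real \<Rightarrow> real set \<Rightarrow> real" where
  "weight q A = q powr (2 * (\<Sum>y\<in>A. y))"

definition Pld :: "real \<Rightarrow> nat \<Rightarrow> nat \<Rightarrow> nat \<Rightarrow> real" where
  "Pld q p l \<delta> =
     (\<Sum>A\<in>{A\<in>configs p. ypos A l = real \<delta> - real l + 1/2}. weight q A)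
     / (\<Sum>A\<in>configs p. weight q A)"

end

theory Submission
  imports Defs
begin


definition T :: "nat \<Rightarrow> nat" where "T k = (\<Sum>i<k. i)"

lemma T_add: "T (a + b) = T a + T b + a * b"
  by (induction b) (auto simp: T_def)

definition S :: "real \<Rightarrow> nat \<Rightarrow> nat \<Rightarrow> real" where
  "S x n k = (\<Sum>B\<in>{B. B \<subseteq> {..<n} \<and> card B = k}. x ^ (\<Sum>B))"

lemma G_Suc_right:
  assumes "x \<noteq> 1" "k < n"
  shows "gauss_binom x n (Suc k) = gauss_binom x n k * (1 - x ^ (n - k)) / (1 - x ^ Suc k)"
  using assms by (simp add: gauss_binom_def)

lemma G_Suc_both:
  assumes "k \<le> n"
  shows "gauss_binom x (Suc n) (Suc k) = gauss_binom x n k * (1 - x ^ Suc n) / (1 - x ^ Suc k)"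
proof -
  have "gauss_binom x (Suc n) (Suc k) = (\<Prod>j<Suc k. (1 - x ^ (Suc n - j)) / (1 - x ^ (j + 1)))"
    using assms by (simp add: gauss_binom_def)
  also have "\<dots> = (1 - x ^ Suc n) / (1 - x) * (\<Prod>j<k. (1 - x ^ (Suc n - Suc j)) / (1 - x ^ (Suc j + 1)))"
    by (subst prod.lessThan_Suc_shift) simp
  finally have 1: "gauss_binom x (Suc n) (Suc k) = (1 - x ^ Suc n) / (1 - x) * (\<Prod>j<k. (1 - x ^ (n - j)) / (1 - x ^ (j + 2)))"
    by simp
  have "gauss_binom x n k * (1 - x ^ Suc n) / (1 - x ^ Suc k) =
     (1 - x ^ Suc n) * ((\<Prod>j<k. (1 - x ^ (n - j)) / (1 - x ^ (j + 1))) / (1 - x ^ Suc k))"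
    using assms by (simp add: gauss_binom_def)
  also have "(\<Prod>j<k. (1 - x ^ (n - j)) / (1 - x ^ (j + 1))) / (1 - x ^ Suc k)
      = (\<Prod>j<k. (1 - x ^ (n - j))) / (\<Prod>j<Suc k. (1 - x ^ (j + 1)))"
    by (simp add: prod_dividef)
  also have "(\<Prod>j<Suc k. (1 - x ^ (j + 1))) = (1 - x) * (\<Prod>j<k. (1 - x ^ (j + 2)))"
    by (subst prod.lessThan_Suc_shift) simp
  finally show ?thesis unfolding 1 by (simp add: prod_dividef)
qed

lemma aux1: "(d::real) \<noteq> 0 \<Longrightarrow> g * u / d + v * g = g * (u + v * d) / d"
  by (simp add: field_simps)

lemma aux2: "k \<le> n \<Longrightarrow> (x::real) ^ (n - k) * x ^ Suc k = x ^ Suc n"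
  by (simp add: power_add[symmetric])

lemma G_pascal:
  assumes "0 < x" "x < 1"
  shows "gauss_binom x (Suc n) (Suc k) = gauss_binom x n (Suc k) + x ^ (n - k) * gauss_binom x n k"
proof (cases "k \<le> n")
  case False then show ?thesis by (simp add: gauss_binom_def)
next
  case True
  have "x ^ Suc k < 1" using assms by (rule power_Suc_less_one)
  then have d: "1 - x ^ Suc k \<noteq> 0" by simp
  have e: "(1 - x ^ (n - k)) + x ^ (n - k) * (1 - x ^ Suc k) = 1 - x ^ Suc n"
    using aux2[OF True, of x] by (simp add: right_diff_distrib)
  show ?thesis
  proof (cases "k < n")
    case True
    have x1: "x \<noteq> 1" using assms by simp
    have "gauss_binom x (Suc n) (Suc k) = gauss_binom x n k * (1 - x ^ Suc n) / (1 - x ^ Suc k)"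
      by (rule G_Suc_both[OF \<open>k \<le> n\<close>])
    also have "\<dots> = gauss_binom x n k * ((1 - x ^ (n - k)) + x ^ (n - k) * (1 - x ^ Suc k)) / (1 - x ^ Suc k)"
      by (simp only: e)
    also have "\<dots> = gauss_binom x n k * (1 - x ^ (n - k)) / (1 - x ^ Suc k) + x ^ (n - k) * gauss_binom x n k"
      by (rule aux1[OF d, symmetric])
    also have "gauss_binom x n k * (1 - x ^ (n - k)) / (1 - x ^ Suc k) = gauss_binom x n (Suc k)"
      by (rule G_Suc_right[OF x1 True, symmetric])
    finally show ?thesis .
  next
    case False
    then have "k = n" using True by simp
    then show ?thesis unfolding G_Suc_both[OF \<open>k \<le> n\<close>] using d
      by (simp add: gauss_binom_def)
  qed
qed

lemma split_sets:
  "{B. B \<subseteq> {..<Suc n} \<and> card B = Suc k} =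
   {B. B \<subseteq> {..<n} \<and> card B = Suc k} \<union> insert n ` {B. B \<subseteq> {..<n} \<and> card B = k}"
proof (intro set_eqI iffI)
  fix B assume "B \<in> {B. B \<subseteq> {..<Suc n} \<and> card B = Suc k}"
  then have B: "B \<subseteq> {..<Suc n}" "card B = Suc k" by auto
  have fin: "finite B" using B(1) finite_subset by blast
  show "B \<in> {B. B \<subseteq> {..<n} \<and> card B = Suc k} \<union> insert n ` {B. B \<subseteq> {..<n} \<and> card B = k}"
  proof (cases "n \<in> B")
    case True
    have "B = insert n (B - {n})" using True by auto
    moreover have "B - {n} \<subseteq> {..<n}" using B(1) by auto
    moreover have "card (B - {n}) = k" using B(2) True fin by simp
    ultimately show ?thesis by blast
  next
    case False
    then have "B \<subseteq> {..<n}" using B(1) by (auto simp: less_Suc_eq)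
    then show ?thesis using B by auto
  qed
next
  fix B assume "B \<in> {B. B \<subseteq> {..<n} \<and> card B = Suc k} \<union> insert n ` {B. B \<subseteq> {..<n} \<and> card B = k}"
  then show "B \<in> {B. B \<subseteq> {..<Suc n} \<and> card B = Suc k}"
  proof
    assume "B \<in> insert n ` {B. B \<subseteq> {..<n} \<and> card B = k}"
    then obtain C where C: "C \<subseteq> {..<n}" "card C = k" "B = insert n C" by auto
    have "finite C" using C(1) finite_subset by blast
    moreover have "n \<notin> C" using C(1) by auto
    ultimately show ?thesis using C by auto
  qed auto
qed

lemma S_Suc:
  "S x (Suc n) (Suc k) = S x n (Suc k) + x ^ n * S x n k"
proof -
  have disj: "{B. B \<subseteq> {..<n} \<and> card B = Suc k} \<inter> insert n ` {B. B \<subseteq> {..<n} \<and> card B = k} = {}"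
    by auto
  have inj: "inj_on (insert n) {B. B \<subseteq> {..<n} \<and> card B = k}"
    by (rule inj_onI) (metis insert_ident lessThan_iff less_irrefl mem_Collect_eq subsetD)
  have fin1: "finite {B. B \<subseteq> {..<n} \<and> card B = Suc k}" by auto
  have fin2: "finite (insert n ` {B. B \<subseteq> {..<n} \<and> card B = k})" by auto
  have "S x (Suc n) (Suc k) = S x n (Suc k) + (\<Sum>B\<in>insert n ` {B. B \<subseteq> {..<n} \<and> card B = k}. x ^ (\<Sum>B))"
    unfolding S_def split_sets by (rule sum.union_disjoint[OF fin1 fin2 disj])
  also have "(\<Sum>B\<in>insert n ` {B. B \<subseteq> {..<n} \<and> card B = k}. x ^ (\<Sum>B))
      = (\<Sum>B\<in>{B. B \<subseteq> {..<n} \<and> card B = k}. x ^ (\<Sum>(insert n B)))"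
    by (rule sum.reindex[OF inj, unfolded comp_def])
  also have "\<dots> = (\<Sum>B\<in>{B. B \<subseteq> {..<n} \<and> card B = k}. x ^ n * x ^ (\<Sum>B))"
  proof (rule sum.cong[OF refl])
    fix B assume "B \<in> {B. B \<subseteq> {..<n} \<and> card B = k}"
    then have "finite B" "n \<notin> B" using finite_subset by auto
    then show "x ^ (\<Sum>(insert n B)) = x ^ n * x ^ (\<Sum>B)" by (simp add: power_add)
  qed
  finally show ?thesis by (simp add: S_def sum_distrib_left)
qed

lemma S_0: "S x n 0 = 1"
proof -
  have "{B. B \<subseteq> {..<n} \<and> card B = 0} = {{}}"
    by (auto dest: finite_subset[OF _ finite_lessThan])
  then show ?thesis by (simp add: S_def)
qed

lemma S_closed:
  assumes "0 < x" "x < 1"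
  shows "S x n k = x ^ T k * gauss_binom x n k"
proof (induction n arbitrary: k)
  case 0
  show ?case
  proof (cases k)
    case 0 then show ?thesis by (simp add: S_0 T_def gauss_binom_def)
  next
    case (Suc k')
    have "{B. B \<subseteq> {..<0::nat} \<and> card B = k} = {}" using Suc by auto
    then show ?thesis using Suc by (simp add: S_def gauss_binom_def)
  qed
next
  case (Suc n)
  show ?case
  proof (cases k)
    case 0 then show ?thesis by (simp add: S_0 T_def gauss_binom_def)
  next
    case (Suc k')
    have T: "T (Suc k') = T k' + k'" by (simp add: T_def)
    show ?thesis
    proof (cases "k' \<le> n")
      case True
      have "x ^ n * (x ^ T k' * gauss_binom x n k') = x ^ T (Suc k') * (x ^ (n - k') * gauss_binom x n k')"
        using True unfolding T by (simp add: power_add[symmetric] mult.assoc[symmetric]) (simp add: add.commute)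
      then show ?thesis unfolding Suc S_Suc Suc.IH G_pascal[OF assms]
        by (simp add: distrib_left)
    next
      case False
      then show ?thesis unfolding Suc S_Suc Suc.IH G_pascal[OF assms]
        by (simp add: gauss_binom_def)
    qed
  qed
qed

lemma image_subsets:
  assumes "inj_on f X"
  shows "{B. B \<subseteq> f ` X \<and> card B = k} = image f ` {B. B \<subseteq> X \<and> card B = k}"
proof (intro set_eqI iffI)
  fix B assume "B \<in> {B. B \<subseteq> f ` X \<and> card B = k}"
  then have B: "B \<subseteq> f ` X" "card B = k" by auto
  then obtain C where C: "C \<subseteq> X" "B = f ` C" by (auto simp: subset_image_iff)
  have "inj_on f C" using inj_on_subset[OF assms C(1)] .
  then have "card C = k" using card_image[of f C] C(2) B(2) by simp
  then show "B \<in> image f ` {B. B \<subseteq> X \<and> card B = k}" using C by blast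
next
  fix B assume "B \<in> image f ` {B. B \<subseteq> X \<and> card B = k}"
  then obtain C where C: "C \<subseteq> X" "B = f ` C" "card C = k" by auto
  have "inj_on f C" using inj_on_subset[OF assms C(1)] .
  then have "card B = k" using card_image[of f C] C by simp
  moreover have "B \<subseteq> f ` X" using C by blast
  ultimately show "B \<in> {B. B \<subseteq> f ` X \<and> card B = k}" by simp
qed

lemma inj_on_image_subsets:
  assumes "inj_on f X"
  shows "inj_on (image f) {B. B \<subseteq> X \<and> card B = k}"
  by (rule inj_on_image, rule inj_on_subset[OF assms]) blast

lemma S_shift:
  "(\<Sum>B\<in>{B. B \<subseteq> {a..<a+n} \<and> card B = k}. x ^ (\<Sum>B)) = x ^ (a * k) * S x n k"
proof -
  have eq: "{a..<a+n} = (\<lambda>b. b + a) ` {..<n}"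
    by (simp add: lessThan_atLeast0 add.commute)
  have inj: "inj_on (\<lambda>b::nat. b + a) {..<n}" by (auto intro: inj_onI)
  have "(\<Sum>B\<in>{B. B \<subseteq> {a..<a+n} \<and> card B = k}. x ^ (\<Sum>B)) =
        (\<Sum>B\<in>{B. B \<subseteq> {..<n} \<and> card B = k}. x ^ (\<Sum>((\<lambda>b. b + a) ` B)))"
    unfolding eq image_subsets[OF inj]
    by (subst sum.reindex[OF inj_on_image_subsets[OF inj]]) (simp add: comp_def)
  also have "\<dots> = (\<Sum>B\<in>{B. B \<subseteq> {..<n} \<and> card B = k}. x ^ (a * k) * x ^ (\<Sum>B))"
  proof (rule sum.cong[OF refl])
    fix B assume B: "B \<in> {B. B \<subseteq> {..<n} \<and> card B = k}"
    have "inj_on (\<lambda>b. b + a) B" by (auto intro: inj_onI)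
    then have "(\<Sum>((\<lambda>b. b + a) ` B)) = (\<Sum>b\<in>B. b + a)" by (simp add: sum.reindex)
    also have "\<dots> = \<Sum>B + a * k" using B by (simp add: sum.distrib)
    finally show "x ^ (\<Sum>((\<lambda>b. b + a) ` B)) = x ^ (a * k) * x ^ (\<Sum>B)"
      by (simp add: power_add)
  qed
  finally show ?thesis by (simp add: S_def sum_distrib_left)
qed

lemma sum_prod_split: "(\<Sum>p\<in>A\<times>B. f (fst p) * g (snd p)) = (\<Sum>a\<in>A. f a) * (\<Sum>b\<in>B. (g b :: 'c::comm_semiring_1))"
  by (simp add: sum_product sum.cartesian_product case_prod_unfold)

lemma decomp:
  fixes x :: real
  assumes "m < N"
  shows "(\<Sum>B\<in>{B. B \<subseteq> {..<N} \<and> card B = r + s + 1 \<and> m \<in> B \<and> card (B \<inter> {..<m}) = r}. x ^ (\<Sum>B))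
         = x ^ m * S x m r * (x ^ (Suc m * s) * S x (N - Suc m) s)"
proof -
  let ?L = "{L. L \<subseteq> {..<m} \<and> card L = r}"
  let ?U = "{U. U \<subseteq> {Suc m..<N} \<and> card U = s}"
  let ?g = "\<lambda>(L, U). insert m (L \<union> U)"
  let ?N = "{B. B \<subseteq> {..<N} \<and> card B = r + s + 1 \<and> m \<in> B \<and> card (B \<inter> {..<m}) = r}"
  have inj: "inj_on ?g (?L \<times> ?U)"
  proof (rule inj_onI)
    fix p p' assume hp: "p \<in> ?L \<times> ?U" "p' \<in> ?L \<times> ?U" "?g p = ?g p'"
    obtain L U L' U' where pp: "p = (L, U)" "p' = (L', U')" by fastforce
    have h: "L \<subseteq> {..<m}" "U \<subseteq> {Suc m..<N}" "L' \<subseteq> {..<m}" "U' \<subseteq> {Suc m..<N}"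
      "insert m (L \<union> U) = insert m (L' \<union> U')" using hp unfolding pp by auto
    have "L = insert m (L \<union> U) \<inter> {..<m}" using h(1,2) by auto
    moreover have "L' = insert m (L' \<union> U') \<inter> {..<m}" using h(3,4) by auto
    moreover have "U = insert m (L \<union> U) \<inter> {Suc m..}" using h(1,2) by auto
    moreover have "U' = insert m (L' \<union> U') \<inter> {Suc m..}" using h(3,4) by auto
    ultimately show "p = p'" using h(5) pp by metis
  qed
  have img: "?g ` (?L \<times> ?U) = ?N"
  proof (intro set_eqI iffI)
    fix B assume "B \<in> ?g ` (?L \<times> ?U)"
    then obtain L U where h: "L \<subseteq> {..<m}" "card L = r" "U \<subseteq> {Suc m..<N}" "card U = s"
      "B = insert m (L \<union> U)" by auto
    have fL: "finite L" and fU: "finite U" using h finite_subset by auto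
    have "L \<inter> U = {}" using h(1,3) by fastforce
    then have "card (L \<union> U) = r + s" using fL fU h by (simp add: card_Un_disjoint)
    moreover have "m \<notin> L \<union> U" using h by auto
    ultimately have "card B = r + s + 1" using h fL fU by simp
    moreover have "B \<inter> {..<m} = L" using h by auto
    moreover have "B \<subseteq> {..<N}" using h assms by auto
    ultimately show "B \<in> ?N" using h by auto
  next
    fix B assume B: "B \<in> ?N"
    define L where "L = B \<inter> {..<m}"
    define U where "U = B \<inter> {Suc m..}"
    have fB: "finite B" using B finite_subset by auto
    have BLU: "B = insert m (L \<union> U)" using B by (auto simp: L_def U_def)
    have "L \<inter> U = {}" "m \<notin> L \<union> U" by (auto simp: L_def U_def)
    then have "card B = card L + card U + 1" using BLU fB
      by (metis L_def U_def Suc_eq_plus1 card_Un_disjoint card_insert_disjoint finite_Int finite_Un)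
    then have "card U = s" using B by (simp add: L_def)
    moreover have "card L = r" using B by (simp add: L_def)
    moreover have "U \<subseteq> {Suc m..<N}" using B by (auto simp: U_def)
    moreover have "L \<subseteq> {..<m}" by (auto simp: L_def)
    ultimately show "B \<in> ?g ` (?L \<times> ?U)" using BLU by blast
  qed
  have "(\<Sum>B\<in>?N. x ^ (\<Sum>B)) = (\<Sum>p\<in>?L \<times> ?U. x ^ (\<Sum>(?g p)))"
    unfolding img[symmetric] by (subst sum.reindex[OF inj]) (simp add: comp_def)
  also have "\<dots> = (\<Sum>p\<in>?L \<times> ?U. x ^ m * (x ^ (\<Sum>(fst p)) * x ^ (\<Sum>(snd p))))"
  proof (rule sum.cong[OF refl])
    fix p assume hp: "p \<in> ?L \<times> ?U"
    obtain L U where pp: "p = (L, U)" by fastforce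
    have h: "L \<subseteq> {..<m}" "U \<subseteq> {Suc m..<N}" using hp pp by auto
    have fL: "finite L" and fU: "finite U" using h finite_subset by auto
    have "L \<inter> U = {}" "m \<notin> L \<union> U" using h(1,2) by fastforce+
    then have "\<Sum>(insert m (L \<union> U)) = m + (\<Sum>L + \<Sum>U)" using fL fU
      by (simp add: sum.union_disjoint)
    then show "x ^ (\<Sum>(?g p)) = x ^ m * (x ^ (\<Sum>(fst p)) * x ^ (\<Sum>(snd p)))"
      by (simp add: power_add pp)
  qed
  also have "\<dots> = x ^ m * ((\<Sum>L\<in>?L. x ^ (\<Sum>L)) * (\<Sum>U\<in>?U. x ^ (\<Sum>U)))"
    by (simp only: sum_distrib_left[symmetric] sum_prod_split[where f="\<lambda>L. x ^ (\<Sum>L)" and g="\<lambda>U. x ^ (\<Sum>U)"])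
  also have "(\<Sum>U\<in>?U. x ^ (\<Sum>U)) = x ^ (Suc m * s) * S x (N - Suc m) s"
    using S_shift[where a="Suc m" and n="N - Suc m" and k=s and x=x] assms by simp
  finally show ?thesis by (simp add: S_def)
qed



lemma nth_sorted_iff:
  fixes xs :: "nat list"
  assumes "sorted_wrt (<) xs" "i < length xs"
  shows "(xs ! i = m) = (m \<in> set xs \<and> length (filter (\<lambda>b. b < m) xs) = i)"
  using assms
proof (induction xs arbitrary: i)
  case Nil then show ?case by simp
next
  case (Cons a xs)
  have gt: "\<forall>y\<in>set xs. a < y" using Cons.prems(1) by simp
  have sxs: "sorted_wrt (<) xs" using Cons.prems(1) by simp
  show ?case
  proof (cases i)
    case 0
    show ?thesis
    proof
      assume "(a # xs) ! i = m"
      then have "m = a" using 0 by simp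
      then show "m \<in> set (a # xs) \<and> length (filter (\<lambda>b. b < m) (a # xs)) = i"
        using gt 0 by (auto simp: filter_empty_conv)
    next
      assume h: "m \<in> set (a # xs) \<and> length (filter (\<lambda>b. b < m) (a # xs)) = i"
      then have "\<not> a < m" using 0 by auto
      moreover have "m \<in> set xs \<Longrightarrow> a < m" using gt by auto
      ultimately have "m = a" using h by auto
      then show "(a # xs) ! i = m" using 0 by simp
    qed
  next
    case (Suc j)
    have j: "j < length xs" using Cons.prems(2) Suc by simp
    show ?thesis
    proof (cases "a < m")
      case True
      then show ?thesis using Suc Cons.IH[OF sxs j] by auto
    next
      case False
      have "filter (\<lambda>b. b < m) (a # xs) = []" using False gt
        by (auto simp: filter_empty_conv)
      moreover have "xs ! j \<noteq> m" using False gt j by (metis nth_mem)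
      ultimately show ?thesis using Suc by simp
    qed
  qed
qed

lemma nth_sorted_set_iff:
  fixes B :: "nat set"
  assumes "finite B" "i < card B"
  shows "(sorted_list_of_set B ! i = m) = (m \<in> B \<and> card (B \<inter> {..<m}) = i)"
proof -
  let ?xs = "sorted_list_of_set B"
  have "card (B \<inter> {..<m}) = length (filter (\<lambda>b. b < m) ?xs)"
  proof -
    have "set (filter (\<lambda>b. b < m) ?xs) = B \<inter> {..<m}" using assms(1) by auto
    moreover have "distinct (filter (\<lambda>b. b < m) ?xs)" by simp
    ultimately show ?thesis by (metis distinct_card)
  qed
  then show ?thesis using nth_sorted_iff[of ?xs i m] assms by simp
qed



definition fs :: "nat \<Rightarrow> nat \<Rightarrow> real" where "fs p k = real k - real p + 1/2"

lemma fs_strict_mono: "strict_mono (fs p)"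
  by (auto simp: strict_mono_def fs_def)

lemma fs_inj: "inj_on (fs p) X"
  using fs_strict_mono strict_mono_imp_inj_on by blast

lemma sites_eq: "sites p = fs p ` {..<2*p}"
proof (intro set_eqI iffI)
  fix y assume "y \<in> sites p"
  then obtain k where k: "y = real_of_int k + 1/2" "- int p \<le> k" "k < int p"
    by (auto simp: sites_def)
  define j where "j = nat (k + int p)"
  have "j < 2 * p" using k by (simp add: j_def)
  moreover have "y = fs p j" using k by (simp add: j_def fs_def)
  ultimately show "y \<in> fs p ` {..<2*p}" by auto
next
  fix y assume "y \<in> fs p ` {..<2*p}"
  then obtain j where j: "j < 2 * p" "y = fs p j" by auto
  define k where "k = int j - int p"
  have "y = real_of_int k + 1/2" "- int p \<le> k" "k < int p" using j by (auto simp: k_def fs_def)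
  then show "y \<in> sites p" by (auto simp: sites_def)
qed

lemma configs_eq: "configs p = image (fs p) ` {B. B \<subseteq> {..<2*p} \<and> card B = p}"
  unfolding configs_def sites_eq by (rule image_subsets[OF fs_inj])

lemma sorted_image: 
  assumes "finite B"
  shows "sorted_list_of_set (fs p ` B) = map (fs p) (sorted_list_of_set B)"
proof -
  have s0: "sorted_wrt (<) (sorted_list_of_set B)" by simp
  have "sorted_wrt (\<lambda>a b. fs p a < fs p b) (sorted_list_of_set B)"
    by (rule sorted_wrt_mono_rel[OF _ s0]) (simp add: fs_def)
  then have "sorted_wrt (<) (map (fs p) (sorted_list_of_set B))"
    by (simp add: sorted_wrt_map)
  moreover have "set (map (fs p) (sorted_list_of_set B)) = fs p ` B" using assms by simp
  moreover have "length (map (fs p) (sorted_list_of_set B)) = card (fs p ` B)"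
    using assms card_image[OF fs_inj] by simp
  ultimately show ?thesis using sorted_list_of_set_unique[OF finite_imageI[OF assms]] by blast
qed

lemma ypos_image:
  assumes "finite B" "1 \<le> l" "l \<le> card B"
  shows "ypos (fs p ` B) l = fs p (sorted_list_of_set B ! (card B - l))"
proof -
  let ?xs = "map (fs p) (sorted_list_of_set B)"
  have len: "length ?xs = card B" by simp
  have "ypos (fs p ` B) l = rev ?xs ! (l - 1)"
    unfolding ypos_def sorted_image[OF assms(1)] ..
  also have "\<dots> = ?xs ! (length ?xs - Suc (l - 1))"
    by (rule rev_nth) (use assms len in linarith)
  also have "length ?xs - Suc (l - 1) = card B - l" using len assms(2) by simp
  also have "?xs ! (card B - l) = fs p (sorted_list_of_set B ! (card B - l))"
    using assms by simp
  finally show ?thesis .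
qed

lemma weight_image:
  assumes "0 < q" "finite B" "card B = p"
  shows "weight q (fs p ` B) = q powr (real p * (1 - 2 * real p)) * (q^2) ^ (\<Sum>B)"
proof -
  have "(\<Sum>y\<in>fs p ` B. y) = (\<Sum>b\<in>B. fs p b)" using sum.reindex[OF fs_inj, of id p B] by simp
  also have "\<dots> = (\<Sum>b\<in>B. real b + (1/2 - real p))" unfolding fs_def by (rule sum.cong) auto
  also have "\<dots> = (\<Sum>b\<in>B. real b) + (\<Sum>b\<in>B. (1/2 - real p))" by (rule sum.distrib)
  also have "(\<Sum>b\<in>B. real b) = real (\<Sum>B)" by (simp add: of_nat_sum)
  also have "(\<Sum>b\<in>B. (1/2 - real p)) = real p * (1/2 - real p)" using assms(3) by simp
  finally have e: "2 * (\<Sum>y\<in>fs p ` B. y) = real p * (1 - 2 * real p) + real (2 * \<Sum>B)"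
    by (simp add: algebra_simps)
  have "weight q (fs p ` B) = q powr (real p * (1 - 2 * real p)) * q powr (real (2 * \<Sum>B))"
    unfolding weight_def e by (rule powr_add)
  also have "q powr (real (2 * \<Sum>B)) = (q^2) ^ (\<Sum>B)"
    using assms(1) by (simp only: powr_realpow power_mult)
  finally show ?thesis .
qed



definition qf :: "real \<Rightarrow> nat \<Rightarrow> real" where "qf x n = (\<Prod>i<n. 1 - x ^ (i + 1))"

lemma one_minus_pow_nz: "0 < x \<Longrightarrow> x < (1::real) \<Longrightarrow> 1 - x ^ Suc i \<noteq> 0"
proof -
  assume a: "0 < x" "x < 1"
  have "x ^ Suc i < 1" using a by (rule power_Suc_less_one)
  then show ?thesis by simp
qed

lemma qf_nonzero: "0 < x \<Longrightarrow> x < 1 \<Longrightarrow> qf x n \<noteq> 0"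
  using one_minus_pow_nz by (simp add: qf_def)

lemma G_fact:
  assumes "0 < x" "x < 1"
  shows "gauss_binom x (k + r) k * qf x k * qf x r = qf x (k + r)"
proof (induction k)
  case 0 then show ?case by (simp add: gauss_binom_def qf_def)
next
  case (Suc k)
  have nz: "1 - x ^ Suc k \<noteq> 0" using one_minus_pow_nz assms by blast
  have "gauss_binom x (Suc k + r) (Suc k) * qf x (Suc k) * qf x r
      = gauss_binom x (Suc (k + r)) (Suc k) * (1 - x ^ Suc k) * qf x k * qf x r"
    by (simp add: qf_def mult_ac)
  also have "gauss_binom x (Suc (k + r)) (Suc k) * (1 - x ^ Suc k) = gauss_binom x (k + r) k * (1 - x ^ Suc (k + r))"
    using nz by (simp add: G_Suc_both)
  also have "gauss_binom x (k + r) k * (1 - x ^ Suc (k + r)) * qf x k * qf x r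
     = (gauss_binom x (k + r) k * qf x k * qf x r) * (1 - x ^ Suc (k + r))" by (simp add: mult_ac)
  also have "\<dots> = qf x (Suc k + r)" unfolding Suc.IH by (simp add: qf_def)
  finally show ?case .
qed

lemma G_sym:
  assumes "0 < x" "x < 1" "k \<le> n"
  shows "gauss_binom x n k = gauss_binom x n (n - k)"
proof -
  have n: "n = k + (n - k)" "n = (n - k) + k" using assms by auto
  have 1: "gauss_binom x n k = qf x n / (qf x k * qf x (n - k))"
    using G_fact[OF assms(1,2), of k "n - k"] qf_nonzero[OF assms(1,2)] n(1)
    by (simp add: field_simps)
  have 2: "gauss_binom x n (n - k) = qf x n / (qf x k * qf x (n - k))"
    using G_fact[OF assms(1,2), of "n - k" k] qf_nonzero[OF assms(1,2)] n(2)
    by (simp add: field_simps)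
  show ?thesis using 1 2 by simp
qed

lemma exponent:
  assumes "1 \<le> l" "l \<le> p"
  shows "(p + d - l) + T (p - l) + Suc (p + d - l) * (l - 1) + T (l - 1) = l * d + T p"
proof -
  define r where "r = p - l"
  define l' where "l' = l - 1"
  have rl: "p = r + Suc l'" "l = Suc l'" using assms by (simp_all add: r_def l'_def)
  have Tp: "T p = T r + (T l' + l') + r * Suc l'" unfolding rl(1) T_add by (simp add: T_def)
  have a: "p + d - l = r + d" "p - l = r" "l - 1 = l'" using rl by simp_all
  show ?thesis unfolding a Tp unfolding rl(2) by (simp add: algebra_simps)
qed



lemma qpoch_qf: "qpoch x x k = qf x k"
  by (simp add: qpoch_def qf_def)

lemma pow_to_zero:
  assumes "0 < x" "x < (1::real)" "filterlim h at_top F"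
  shows "((\<lambda>n. x ^ h n) \<longlongrightarrow> 0) F"
proof -
  have "(\<lambda>n. x ^ n) \<longlonglongrightarrow> 0" using assms by (intro LIMSEQ_power_zero) simp
  then show ?thesis using filterlim_compose assms(3) by blast
qed

lemma G_lim:
  assumes x: "0 < x" "x < 1" and h: "filterlim h at_top F"
  shows "((\<lambda>n. gauss_binom x (h n) k) \<longlongrightarrow> 1 / qf x k) F"
proof -
  have ev: "eventually (\<lambda>n. k \<le> h n) F" using h by (simp add: filterlim_at_top)
  have fac: "((\<lambda>n. 1 - x ^ (h n - j)) \<longlongrightarrow> 1) F" for j
  proof -
    have "filterlim (\<lambda>n. h n - j) at_top F"
      unfolding filterlim_at_top
    proof
      fix Z
      have "eventually (\<lambda>n. Z + j \<le> h n) F" using h by (simp add: filterlim_at_top)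
      then show "eventually (\<lambda>n. Z \<le> h n - j) F" by (rule eventually_mono) arith
    qed
    then have "((\<lambda>n. x ^ (h n - j)) \<longlongrightarrow> 0) F" using pow_to_zero[OF x] by blast
    then have "((\<lambda>n. 1 - x ^ (h n - j)) \<longlongrightarrow> 1 - 0) F" by (rule tendsto_diff[OF tendsto_const])
    then show ?thesis by simp
  qed
  have "((\<lambda>n. \<Prod>j<k. 1 - x ^ (h n - j)) \<longlongrightarrow> (\<Prod>j<k. (1::real))) F"
    by (rule tendsto_prod) (rule fac)
  then have "((\<lambda>n. (\<Prod>j<k. 1 - x ^ (h n - j)) / qf x k) \<longlongrightarrow> 1 / qf x k) F"
    using qf_nonzero[OF x] by (intro tendsto_divide tendsto_const) simp_all
  then show ?thesis
  proof (rule Lim_transform_eventually)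
    show "eventually (\<lambda>n. (\<Prod>j<k. 1 - x ^ (h n - j)) / qf x k = gauss_binom x (h n) k) F"
      using ev
    proof (rule eventually_mono)
      fix n assume "k \<le> h n"
      then show "(\<Prod>j<k. 1 - x ^ (h n - j)) / qf x k = gauss_binom x (h n) k"
        by (simp only: gauss_binom_def if_True prod_dividef qf_def)
    qed
  qed
qed

lemma qf_lim:
  assumes x: "0 < x" "x < 1"
  shows "qf x \<longlonglongrightarrow> qpoch_inf x x" and "qpoch_inf x x \<noteq> 0"
proof -
  have sm: "summable (\<lambda>i. norm ((1 - x * x ^ i) - 1))"
    using x by (simp add: summable_geometric summable_mult)
  have cp: "convergent_prod (\<lambda>i. 1 - x * x ^ i)"
    by (rule abs_convergent_prod_imp_convergent_prod[OF summable_imp_abs_convergent_prod[OF sm]])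
  have "(\<lambda>n. \<Prod>i\<le>n. 1 - x * x ^ i) \<longlonglongrightarrow> qpoch_inf x x"
    unfolding qpoch_inf_def by (rule convergent_prod_LIMSEQ[OF cp])
  then have "(\<lambda>n. \<Prod>i<n. 1 - x * x ^ i) \<longlonglongrightarrow> qpoch_inf x x"
    by (subst LIMSEQ_lessThan_iff_atMost)
  then show "qf x \<longlonglongrightarrow> qpoch_inf x x" by (simp add: qf_def[abs_def])
  show "qpoch_inf x x \<noteq> 0" unfolding qpoch_inf_def
  proof (rule prodinf_nonzero[OF cp])
    fix i show "1 - x * x ^ i \<noteq> 0" using one_minus_pow_nz[OF x, of i] by simp
  qed
qed



lemma filter_image_eq: "{A \<in> h ` D. P A} = h ` {B \<in> D. P (h B)}"
  by blast

lemma finite_formula: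
  assumes q: "0 < q" "q < 1" and p: "1 \<le> l" "l \<le> p" "\<delta> \<le> p"
  shows "Pld q p l \<delta> = q ^ (2 * l * \<delta>) *
              (gauss_binom (q^2) (p + \<delta> - l) \<delta> * gauss_binom (q^2) (p - \<delta> + l - 1) (l - 1))
              / gauss_binom (q^2) (2 * p) p"
proof -
  define x where "x = q^2"
  have x1: "0 < x" unfolding x_def using q by simp
  have x2: "x < 1" unfolding x_def using power_Suc_less_one[OF q, of 1] by (simp add: numeral_2_eq_2)
  note x = x1 x2
  define c where "c = q powr (real p * (1 - 2 * real p))"
  have c: "c > 0" using q by (simp add: c_def)
  define m where "m = p + \<delta> - l"
  have m: "m < 2 * p" using p by (simp add: m_def)
  define D where "D = {B. B \<subseteq> {..<2*p} \<and> card B = p}"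
  define N where "N = {B. B \<subseteq> {..<2*p} \<and> card B = (p - l) + (l - 1) + 1 \<and> m \<in> B \<and> card (B \<inter> {..<m}) = p - l}"
  have finB: "\<And>B. B \<in> D \<Longrightarrow> finite B" unfolding D_def using finite_subset by blast
  have inj: "inj_on (image (fs p)) D" unfolding D_def by (rule inj_on_image_subsets[OF fs_inj])
  have wt: "weight q (fs p ` B) = c * x ^ (\<Sum>B)" if "B \<in> D" for B
  proof -
    have "card B = p" using that by (simp add: D_def)
    then show ?thesis using weight_image[OF q(1) finB[OF that]] by (simp add: c_def x_def)
  qed
  have den: "(\<Sum>A\<in>configs p. weight q A) = c * S x (2*p) p"
  proof -
    have "(\<Sum>A\<in>configs p. weight q A) = (\<Sum>B\<in>D. weight q (fs p ` B))"
      unfolding configs_eq D_def[symmetric] using sum.reindex[OF inj, of "weight q"] by (simp add: comp_def)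
    also have "\<dots> = (\<Sum>B\<in>D. c * x ^ (\<Sum>B))" by (rule sum.cong[OF refl]) (rule wt)
    also have "\<dots> = c * S x (2*p) p" unfolding S_def D_def by (rule sum_distrib_left[symmetric])
    finally show ?thesis .
  qed
  have pp: "(p - l) + (l - 1) + 1 = p" using p by simp
  have cond: "(ypos (fs p ` B) l = real \<delta> - real l + 1/2) = (B \<in> N)" if B: "B \<in> D" for B
  proof -
    have cB: "card B = p" using B by (simp add: D_def)
    have fm: "fs p m = real \<delta> - real l + 1/2" using p by (simp add: fs_def m_def)
    have "ypos (fs p ` B) l = fs p (sorted_list_of_set B ! (p - l))"
      using ypos_image[OF finB[OF B] p(1)] cB p(2) by simp
    then have "(ypos (fs p ` B) l = real \<delta> - real l + 1/2) = (fs p (sorted_list_of_set B ! (p - l)) = fs p m)"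
      using fm by simp
    also have "\<dots> = (sorted_list_of_set B ! (p - l) = m)"
      using strict_mono_eq[OF fs_strict_mono] by blast
    also have "\<dots> = (m \<in> B \<and> card (B \<inter> {..<m}) = p - l)"
      by (rule nth_sorted_set_iff[OF finB[OF B]]) (use cB p in simp)
    also have "\<dots> = (B \<in> N)" using B unfolding N_def D_def pp by blast
    finally show ?thesis .
  qed
  have ND: "N \<subseteq> D" unfolding N_def D_def pp by blast
  have setN: "{A \<in> configs p. ypos A l = real \<delta> - real l + 1/2} = image (fs p) ` N"
  proof -
    have "{B \<in> D. ypos (fs p ` B) l = real \<delta> - real l + 1/2} = N" using cond ND by blast
    then show ?thesis unfolding configs_eq D_def[symmetric] filter_image_eq by simp
  qed
  have num: "(\<Sum>A\<in>{A \<in> configs p. ypos A l = real \<delta> - real l + 1/2}. weight q A)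
     = c * (\<Sum>B\<in>N. x ^ (\<Sum>B))"
  proof -
    have "(\<Sum>A\<in>image (fs p) ` N. weight q A) = (\<Sum>B\<in>N. weight q (fs p ` B))"
      using sum.reindex[OF inj_on_subset[OF inj ND], of "weight q"] by (simp add: comp_def)
    also have "\<dots> = (\<Sum>B\<in>N. c * x ^ (\<Sum>B))" by (rule sum.cong[OF refl]) (use ND wt in blast)
    also have "\<dots> = c * (\<Sum>B\<in>N. x ^ (\<Sum>B))" by (rule sum_distrib_left[symmetric])
    finally show ?thesis unfolding setN .
  qed
  define G1 where "G1 = gauss_binom x (p + \<delta> - l) \<delta>"
  define G2 where "G2 = gauss_binom x (p - \<delta> + l - 1) (l - 1)"
  define E where "E = m + T (p - l) + Suc m * (l - 1) + T (l - 1)"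
  have "(\<Sum>B\<in>N. x ^ (\<Sum>B)) = x ^ m * S x m (p - l) * (x ^ (Suc m * (l - 1)) * S x (2 * p - Suc m) (l - 1))"
    unfolding N_def by (rule decomp[OF m])
  also have "\<dots> = x ^ m * (x ^ T (p - l) * G1) * (x ^ (Suc m * (l - 1)) * (x ^ T (l - 1) * G2))"
  proof -
    have "gauss_binom x m (p - l) = G1"
      unfolding G1_def using G_sym[OF x, of "p - l" m] p by (simp add: m_def)
    moreover have "2 * p - Suc m = p - \<delta> + l - 1" using p by (simp add: m_def)
    ultimately show ?thesis unfolding S_closed[OF x] G2_def by simp
  qed
  also have "\<dots> = x ^ E * (G1 * G2)" unfolding E_def power_add by (simp only: ac_simps)
  also have "E = l * \<delta> + T p" unfolding E_def m_def by (rule exponent[OF p(1,2)])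
  finally have num2: "(\<Sum>B\<in>N. x ^ (\<Sum>B)) = x ^ (l * \<delta>) * x ^ T p * (G1 * G2)" by (simp add: power_add)
  have xT: "x ^ T p \<noteq> 0" using x by simp
  have "Pld q p l \<delta> = (c * (x ^ (l * \<delta>) * x ^ T p * (G1 * G2))) / (c * (x ^ T p * gauss_binom x (2 * p) p))"
    unfolding Pld_def num num2 den S_closed[OF x] ..
  also have "\<dots> = x ^ (l * \<delta>) * (G1 * G2) / gauss_binom x (2 * p) p"
    using c x1 by simp
  finally show ?thesis by (simp add: x_def G1_def G2_def power_mult)
qed

theorem mainTheorem2:
  fixes q :: real
  assumes "0 < q" and "q < 1"
  shows "(\<forall>p l \<delta>. 1 \<le> p \<longrightarrow> 1 \<le> l \<longrightarrow> l \<le> p \<longrightarrow> \<delta> \<le> p \<longrightarrow>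
            Pld q p l \<delta> =
              q ^ (2 * l * \<delta>) *
              (gauss_binom (q^2) (p + \<delta> - l) \<delta> * gauss_binom (q^2) (p - \<delta> + l - 1) (l - 1))
              / gauss_binom (q^2) (2 * p) p)
       \<and> (\<forall>l \<delta>. 1 \<le> l \<longrightarrow>
            (\<lambda>p. Pld q p l \<delta>) \<longlonglongrightarrow>
              q ^ (2 * l * \<delta>) * qpoch_inf (q^2) (q^2) / (qpoch (q^2) (q^2) (l - 1) * qpoch (q^2) (q^2) \<delta>))"
proof (intro conjI allI impI)
  fix p l \<delta> :: nat
  assume "1 \<le> p" "1 \<le> l" "l \<le> p" "\<delta> \<le> p"
  then show "Pld q p l \<delta> =
              q ^ (2 * l * \<delta>) *
              (gauss_binom (q^2) (p + \<delta> - l) \<delta> * gauss_binom (q^2) (p - \<delta> + l - 1) (l - 1))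
              / gauss_binom (q^2) (2 * p) p"
    using finite_formula[OF assms] by blast
next
  fix l \<delta> :: nat
  assume l: "1 \<le> l"
  define x where "x = q^2"
  have x: "0 < x" "x < 1" using assms by (auto simp: x_def power_less_one_iff)
  define Q where "Q = qpoch_inf x x"
  have Q: "Q \<noteq> 0" using qf_lim(2)[OF x] by (simp add: Q_def)
  have h1: "filterlim (\<lambda>p. p + \<delta> - l) at_top sequentially"
    unfolding filterlim_at_top eventually_sequentially
  proof
    fix Z show "\<exists>N. \<forall>n\<ge>N. Z \<le> n + \<delta> - l" by (rule exI[of _ "Z + l"]) auto
  qed
  have h2: "filterlim (\<lambda>p. p - \<delta> + l - 1) at_top sequentially"
    unfolding filterlim_at_top eventually_sequentially
  proof
    fix Z show "\<exists>N. \<forall>n\<ge>N. Z \<le> n - \<delta> + l - 1" by (rule exI[of _ "Z + \<delta>"]) (intro allI impI, insert l, linarith)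
  qed
  have h3: "filterlim (\<lambda>p::nat. 2 * p) at_top sequentially"
    unfolding filterlim_at_top eventually_sequentially
  proof
    fix Z show "\<exists>N. \<forall>n\<ge>N. Z \<le> 2 * (n::nat)" by (rule exI[of _ Z]) simp
  qed
  have nzq: "\<And>n. qf x n \<noteq> 0" using qf_nonzero[OF x] .
  have G2p: "gauss_binom x (2 * p) p = qf x (2 * p) / (qf x p * qf x p)" for p
  proof -
    have "gauss_binom x (2 * p) p * (qf x p * qf x p) = qf x (2 * p)"
      using G_fact[OF x, of p p] by (simp only: mult_2 mult.assoc)
    then show ?thesis using nzq[of p] by (simp add: eq_divide_eq)
  qed
  have lq: "qf x \<longlonglongrightarrow> Q" using qf_lim(1)[OF x] by (simp add: Q_def)
  have lq2: "(\<lambda>p. qf x (2 * p)) \<longlonglongrightarrow> Q"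
    using filterlim_compose[OF lq h3] .
  have QQ: "Q * Q \<noteq> 0" using Q by simp
  have lg: "(\<lambda>p. gauss_binom x (2 * p) p) \<longlonglongrightarrow> Q / (Q * Q)"
    unfolding G2p by (rule tendsto_divide[OF lq2 tendsto_mult[OF lq lq] QQ])
  have QQ2: "Q / (Q * Q) \<noteq> 0" using Q by simp
  have lim: "(\<lambda>p. x ^ (l * \<delta>) * (gauss_binom x (p + \<delta> - l) \<delta> * gauss_binom x (p - \<delta> + l - 1) (l - 1))
      / gauss_binom x (2 * p) p) \<longlonglongrightarrow> x ^ (l * \<delta>) * (1 / qf x \<delta> * (1 / qf x (l - 1))) / (Q / (Q * Q))"
    by (rule tendsto_divide[OF tendsto_mult[OF tendsto_const tendsto_mult[OF G_lim[OF x h1] G_lim[OF x h2]]] lg QQ2])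
  have eq: "x ^ (l * \<delta>) * (1 / qf x \<delta> * (1 / qf x (l - 1))) / (Q / (Q * Q))
     = q ^ (2 * l * \<delta>) * qpoch_inf (q^2) (q^2) / (qpoch (q^2) (q^2) (l - 1) * qpoch (q^2) (q^2) \<delta>)"
  proof -
    have "Q / (Q * Q) = 1 / Q" using Q by simp
    then have "x ^ (l * \<delta>) * (1 / qf x \<delta> * (1 / qf x (l - 1))) / (Q / (Q * Q))
       = x ^ (l * \<delta>) * Q / (qf x (l - 1) * qf x \<delta>)" by simp
    also have "\<dots> = q ^ (2 * l * \<delta>) * qpoch_inf (q^2) (q^2) / (qpoch (q^2) (q^2) (l - 1) * qpoch (q^2) (q^2) \<delta>)"
      by (simp add: qpoch_qf Q_def x_def power_mult)
    finally show ?thesis .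
  qed
  show "(\<lambda>p. Pld q p l \<delta>) \<longlonglongrightarrow>
              q ^ (2 * l * \<delta>) * qpoch_inf (q^2) (q^2) / (qpoch (q^2) (q^2) (l - 1) * qpoch (q^2) (q^2) \<delta>)"
    unfolding eq[symmetric]
  proof (rule Lim_transform_eventually[OF lim])
    show "\<forall>\<^sub>F p in sequentially. x ^ (l * \<delta>) * (gauss_binom x (p + \<delta> - l) \<delta> * gauss_binom x (p - \<delta> + l - 1) (l - 1))
      / gauss_binom x (2 * p) p = Pld q p l \<delta>"
      unfolding eventually_sequentially
    proof (intro exI allI impI)
      fix p assume "l + \<delta> \<le> p"
      then show "x ^ (l * \<delta>) * (gauss_binom x (p + \<delta> - l) \<delta> * gauss_binom x (p - \<delta> + l - 1) (l - 1))
      / gauss_binom x (2 * p) p = Pld q p l \<delta>"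
        using finite_formula[OF assms l, of p \<delta>] by (simp add: x_def power_mult)
    qed
  qed
qed

end
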